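(* (Generalised Haldane relations.) Suppose the dynamic deficiency of the network is $0$, i.e. $\ker M=\ker\mathcal{L}(G)$. Let $G_1$ be a terminal strongly connected component of $G$, whose complexes (after reordering) are $C_1,\dots,C_k$, and let $\rho\in\ker\mathcal{L}(G)$ be a nonzero vector vanishing at all complexes outside $G_1$ (such a vector exists, is unique up to scaling, and has all entries $\rho_1,\dots,\rho_k$ nonzero). Then for every steady state $x$ and every $2\le i\le k$, \[x^{C_i}=\frac{\rho_i}{\rho_1}\,x^{C_1},\] these $k-1$ relations are type 1 complex-linear invariants on $C_1,\dots,C_k$, and they form a basis of $I_k$ (so $\dim I_k=k-1$).
   Context: Setup: species $S_1,\dots,S_n$, concentrations $x$, complexes $C_1,\dots,C_m\in\mathbb{Z}_{\ge0}^n$, reaction graph $G$ on complexes with positive edge labels $\kappa_{ij}$. Laplacian $\mathcal{L}(G)$: $\mathcal{L}(G)_{ji}=\kappa_{ij}$ for edges $C_i\to C_j$, other off-diagonal entries $0$, $\mathcal{L}(G)_{ii}=-\sum_j\kappa_{ij}$. $Y$ is the $n\times m$ matrix with columns $C_i$; $x^C=\prod_jx_j^{C(S_j)}$, $\Psi(x)=(x^{C_1},\dots,x^{C_m})^\top$; dynamics $dx/dt=Y\mathcal{L}(G)\Psi(x)$; $M=Y\mathcal{L}(G)$; steady state means $M\Psi(x)=0$. A strongly connected component (SCC) of $G$ is a maximal subgraph in which any two nodes are joined by directed paths in both directions; it is terminal if no edge leaves it. The dynamic deficiency is $\delta_D=\dim\ker M-\dim\ker\mathcal{L}(G)$. A type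 1 complex-linear invariant on $C_1,\dots,C_k$ is a polynomial $a_1x^{C_1}+\dots+a_kx^{C_k}$ with $(a_1,\dots,a_k,0,\dots,0)$ in the row span of $M$; $I_k$ is the space of these. *)

theory Defs
  imports "HOL-Analysis.Analysis"
begin

text \<open>Complexes are indexed by a finite type 'm, species by a
  finite type 'n.  C i s is the stoichiometric coefficient of species s in complex i.\<close>

definition laplacian :: "('m::finite \<times> 'm) set \<Rightarrow> ('m \<Rightarrow> 'm \<Rightarrow> real) \<Rightarrow> real^'m^'m" where
  "laplacian E kappa = (\<chi> j i.
     if i = j then - (\<Sum>l\<in>{l. (i, l) \<in> E \<and> l \<noteq> i}. kappa i l)
     else if (i, j) \<in> E then kappa i j else 0)"

definition complex_matrix :: "('m::finite \<Rightarrow> 'n::finite \<Rightarrow> nat) \<Rightarrow> real^'m^'n" where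
  "complex_matrix C = (\<chi> s i. real (C i s))"

definition Mmat :: "('m::finite \<Rightarrow> 'n::finite \<Rightarrow> nat) \<Rightarrow> ('m \<times> 'm) set \<Rightarrow> ('m \<Rightarrow> 'm \<Rightarrow> real) \<Rightarrow> real^'m^'n" where
  "Mmat C E kappa = complex_matrix C ** laplacian E kappa"

definition Psi :: "('m::finite \<Rightarrow> 'n::finite \<Rightarrow> nat) \<Rightarrow> real^'n \<Rightarrow> real^'m" where
  "Psi C x = (\<chi> i. \<Prod>s\<in>UNIV. (x $ s) ^ (C i s))"

definition matkernel :: "real^'a::finite^'b::finite \<Rightarrow> (real^'a) set" where
  "matkernel A = {v. A *v v = 0}"

definition rowspan :: "real^'a::finite^'b::finite \<Rightarrow> (real^'a) set" where
  "rowspan A = span (rows A)"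

definition is_steady_state :: "('m::finite \<Rightarrow> 'n::finite \<Rightarrow> nat) \<Rightarrow> ('m \<times> 'm) set \<Rightarrow> ('m \<Rightarrow> 'm \<Rightarrow> real) \<Rightarrow> real^'n \<Rightarrow> bool" where
  "is_steady_state C E kappa x \<longleftrightarrow> Mmat C E kappa *v Psi C x = 0"

definition dynamic_deficiency :: "('m::finite \<Rightarrow> 'n::finite \<Rightarrow> nat) \<Rightarrow> ('m \<times> 'm) set \<Rightarrow> ('m \<Rightarrow> 'm \<Rightarrow> real) \<Rightarrow> int" where
  "dynamic_deficiency C E kappa =
     int (dim (matkernel (Mmat C E kappa))) - int (dim (matkernel (laplacian E kappa)))"

definition is_scc :: "('m \<times> 'm) set \<Rightarrow> 'm set \<Rightarrow> bool" where
  "is_scc E S \<longleftrightarrow> S \<noteq> {} \<and> (\<forall>a\<in>S. \<forall>b\<in>S. (a, b) \<in> E\<^sup>*)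
     \<and> (\<forall>a\<in>S. \<forall>b. (a, b) \<in> E\<^sup>* \<and> (b, a) \<in> E\<^sup>* \<longrightarrow> b \<in> S)"

definition is_terminal_scc :: "('m \<times> 'm) set \<Rightarrow> 'm set \<Rightarrow> bool" where
  "is_terminal_scc E S \<longleftrightarrow> is_scc E S \<and> (\<forall>a\<in>S. \<forall>b. (a, b) \<in> E \<longrightarrow> b \<in> S)"

text \<open>Type 1 complex-linear invariants on the complexes in S, identified with their
  coefficient vectors: vectors supported on S lying in the row span of M.\<close>
definition type1_invariants :: "('m::finite \<Rightarrow> 'n::finite \<Rightarrow> nat) \<Rightarrow> ('m \<times> 'm) set \<Rightarrow> ('m \<Rightarrow> 'm \<Rightarrow> real) \<Rightarrow> 'm set \<Rightarrow> (real^'m) set" where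
  "type1_invariants C E kappa S = {a. (\<forall>j. j \<notin> S \<longrightarrow> a $ j = 0) \<and> a \<in> rowspan (Mmat C E kappa)}"

text \<open>Coefficient vector of the Haldane relation x^{C_i} - (rho_i/rho_1) x^{C_1}.\<close>
definition haldane_vec :: "real^'m::finite \<Rightarrow> 'm \<Rightarrow> 'm \<Rightarrow> real^'m" where
  "haldane_vec rho c1 i = axis i 1 - (rho $ i / rho $ c1) *\<^sub>R axis c1 1"

end

theory Submission
  imports Defs
begin

definition Kw :: "('m \<times> 'm) set \<Rightarrow> ('m \<Rightarrow> 'm \<Rightarrow> real) \<Rightarrow> 'm \<Rightarrow> 'm \<Rightarrow> real" where
  "Kw E kappa i j = (if (i, j) \<in> E \<and> i \<noteq> j then kappa i j else 0)"

lemma lap_row: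
  fixes E :: "('m::finite \<times> 'm) set"
  shows "(laplacian E kappa *v v) $ j = (\<Sum>i\<in>UNIV. Kw E kappa i j * v $ i) - (\<Sum>l\<in>UNIV. Kw E kappa j l) * v $ j"
proof -
  have d: "(\<Sum>l\<in>{l. (j, l) \<in> E \<and> l \<noteq> j}. kappa j l) = (\<Sum>l\<in>UNIV. Kw E kappa j l)"
    unfolding Kw_def by (simp add: sum.If_cases Int_def conj_commute eq_commute)
  have "(laplacian E kappa *v v) $ j = (\<Sum>i\<in>UNIV. laplacian E kappa $ j $ i * v $ i)"
    by (simp add: matrix_vector_mult_def)
  also have "\<dots> = (\<Sum>i\<in>UNIV. Kw E kappa i j * v $ i + (if i = j then - (\<Sum>l\<in>UNIV. Kw E kappa j l) * v $ j else 0))"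
    by (rule sum.cong) (auto simp: laplacian_def Kw_def d)
  also have "\<dots> = (\<Sum>i\<in>UNIV. Kw E kappa i j * v $ i) - (\<Sum>l\<in>UNIV. Kw E kappa j l) * v $ j"
    by (simp add: sum.distrib)
  finally show ?thesis .
qed

lemma Kw_nonneg: "(\<And>i j. (i, j) \<in> E \<Longrightarrow> kappa i j > 0) \<Longrightarrow> Kw E kappa i j \<ge> 0"
  unfolding Kw_def by (auto intro: less_imp_le)

lemma closure_lemma:
  fixes E :: "('m::finite \<times> 'm) set" and v :: "real^'m"
  assumes kpos: "\<And>i j. (i, j) \<in> E \<Longrightarrow> kappa i j > 0"
    and H1: "\<And>j. j \<in> Z \<Longrightarrow> v $ j \<noteq> 0"
    and H2: "\<And>j. j \<in> Z \<Longrightarrow> (laplacian E kappa *v v) $ j = 0"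
    and H3: "\<And>i j. j \<in> Z \<Longrightarrow> (i, j) \<in> E \<Longrightarrow> i \<noteq> j \<Longrightarrow> v $ i \<noteq> 0 \<Longrightarrow> i \<in> Z"
    and i: "i \<in> Z" and e: "(i, l) \<in> E"
  shows "l \<in> Z"
proof (rule ccontr)
  assume lZ: "l \<notin> Z"
  let ?K = "Kw E kappa"
  define d where "d j = (\<Sum>l\<in>UNIV. ?K j l)" for j
  have K0: "\<And>a b. ?K a b \<ge> 0" using kpos by (simp add: Kw_def less_imp_le)
  have eqj: "d j * v $ j = (\<Sum>i\<in>Z. ?K i j * v $ i)" if j: "j \<in> Z" for j
  proof -
    have "d j * v $ j = (\<Sum>i\<in>UNIV. ?K i j * v $ i)"
      using H2[OF j] lap_row[of E kappa v j] by (simp add: d_def)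
    also have "\<dots> = (\<Sum>i\<in>Z. ?K i j * v $ i)"
    proof (rule sum.mono_neutral_right)
      show "\<forall>i\<in>UNIV - Z. ?K i j * v $ i = 0"
        using H3[OF j] by (auto simp: Kw_def)
    qed auto
    finally show ?thesis .
  qed
  have ineqj: "d j * \<bar>v $ j\<bar> \<le> (\<Sum>i\<in>Z. ?K i j * \<bar>v $ i\<bar>)" if j: "j \<in> Z" for j
  proof -
    have "d j \<ge> 0" unfolding d_def by (rule sum_nonneg) (use K0 in auto)
    then have "d j * \<bar>v $ j\<bar> = \<bar>d j * v $ j\<bar>" by (simp add: abs_mult)
    also have "\<dots> = \<bar>\<Sum>i\<in>Z. ?K i j * v $ i\<bar>" using eqj[OF j] by simp
    also have "\<dots> \<le> (\<Sum>i\<in>Z. \<bar>?K i j * v $ i\<bar>)" by (rule sum_abs)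
    also have "\<dots> = (\<Sum>i\<in>Z. ?K i j * \<bar>v $ i\<bar>)" using K0 by (simp add: abs_mult)
    finally show ?thesis .
  qed
  have "(\<Sum>j\<in>Z. d j * \<bar>v $ j\<bar>) \<le> (\<Sum>j\<in>Z. \<Sum>i\<in>Z. ?K i j * \<bar>v $ i\<bar>)"
    by (rule sum_mono) (rule ineqj)
  also have "\<dots> = (\<Sum>i\<in>Z. \<Sum>j\<in>Z. ?K i j * \<bar>v $ i\<bar>)"
    by (rule sum.swap)
  also have "\<dots> = (\<Sum>i\<in>Z. \<bar>v $ i\<bar> * (\<Sum>j\<in>Z. ?K i j))"
    by (rule sum.cong[OF refl]) (simp add: sum_distrib_left mult.commute)
  also have "\<dots> < (\<Sum>i\<in>Z. \<bar>v $ i\<bar> * d i)"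
  proof (rule sum_strict_mono_ex1)
    have le: "(\<Sum>j\<in>Z. ?K a j) \<le> d a" for a
      unfolding d_def by (rule sum_mono2) (use K0 in auto)
    show "\<forall>a\<in>Z. \<bar>v $ a\<bar> * (\<Sum>j\<in>Z. ?K a j) \<le> \<bar>v $ a\<bar> * d a"
      using le by (simp add: mult_left_mono)
    have "(\<Sum>j\<in>Z. ?K i j) < d i"
    proof -
      have "(\<Sum>j\<in>Z. ?K i j) < (\<Sum>j\<in>insert l Z. ?K i j)"
      proof -
        have "?K i l > 0" using lZ i e kpos[OF e] unfolding Kw_def by auto
        then show ?thesis using lZ by (simp add: sum.insert)
      qed
      also have "\<dots> \<le> d i" unfolding d_def by (rule sum_mono2) (use K0 in auto)
      finally show ?thesis .
    qed
    moreover have "\<bar>v $ i\<bar> > 0" using H1[OF i] by simp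
    ultimately show "\<exists>a\<in>Z. \<bar>v $ a\<bar> * (\<Sum>j\<in>Z. ?K a j) < \<bar>v $ a\<bar> * d a"
      using i by (intro bexI[of _ i]) auto
  qed auto
  finally have "(\<Sum>j\<in>Z. d j * \<bar>v $ j\<bar>) < (\<Sum>i\<in>Z. \<bar>v $ i\<bar> * d i)" .
  then show False by (simp add: mult.commute)
qed

lemma closure_rtrancl:
  assumes "\<And>i l. i \<in> Z \<Longrightarrow> (i, l) \<in> E \<Longrightarrow> l \<in> Z" "(a, b) \<in> E\<^sup>*" "a \<in> Z"
  shows "b \<in> Z"
  using assms(2,3) by (induction rule: rtrancl_induct) (auto intro: assms(1))

lemma transient_zero:
  fixes E :: "('m::finite \<times> 'm) set" and v :: "real^'m"
  assumes kpos: "\<And>i j. (i, j) \<in> E \<Longrightarrow> kappa i j > 0"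
    and trm: "is_terminal_scc E S"
    and v: "v \<in> matkernel (laplacian E kappa)"
    and i: "i \<notin> S" and path: "(i, s) \<in> E\<^sup>*" and s: "s \<in> S"
  shows "v $ i = 0"
proof (rule ccontr)
  assume vi: "v $ i \<noteq> 0"
  define Z where "Z = {i. i \<notin> S \<and> (\<exists>s\<in>S. (i, s) \<in> E\<^sup>*) \<and> v $ i \<noteq> 0}"
  have tS: "\<And>a b. a \<in> S \<Longrightarrow> (a, b) \<in> E \<Longrightarrow> b \<in> S"
    using trm unfolding is_terminal_scc_def by blast
  have cl: "l \<in> Z" if "a \<in> Z" "(a, l) \<in> E" for a l
  proof (rule closure_lemma[OF kpos, where Z=Z and v=v])
    show "\<And>j. j \<in> Z \<Longrightarrow> v $ j \<noteq> 0" by (simp add: Z_def)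
    show "\<And>j. j \<in> Z \<Longrightarrow> (laplacian E kappa *v v) $ j = 0"
      using v by (simp add: matkernel_def)
    show "a' \<in> Z" if "j \<in> Z" "(a', j) \<in> E" "a' \<noteq> j" "v $ a' \<noteq> 0" for a' j
    proof -
      from that(1) obtain s' where "j \<notin> S" "s' \<in> S" "(j, s') \<in> E\<^sup>*" by (auto simp: Z_def)
      moreover have "a' \<notin> S" using tS that(2) \<open>j \<notin> S\<close> by blast
      moreover have "(a', s') \<in> E\<^sup>*"
        using that(2) \<open>(j, s') \<in> E\<^sup>*\<close> by (rule converse_rtrancl_into_rtrancl)
      ultimately show ?thesis using that(4) by (auto simp: Z_def)
    qed
  qed (use that in auto)
  have "i \<in> Z" using i path s vi by (auto simp: Z_def)
  then have "s \<in> Z" by (intro closure_rtrancl[of Z E i s]) (use cl path in auto)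
  then show False using s by (simp add: Z_def)
qed

lemma rho_nonzero:
  fixes E :: "('m::finite \<times> 'm) set" and rho :: "real^'m"
  assumes kpos: "\<And>i j. (i, j) \<in> E \<Longrightarrow> kappa i j > 0"
    and trm: "is_terminal_scc E S"
    and rho_ker: "rho \<in> matkernel (laplacian E kappa)"
    and rho_nz: "rho \<noteq> 0"
    and rho_supp: "\<And>j. j \<notin> S \<Longrightarrow> rho $ j = 0"
    and k: "k \<in> S"
  shows "rho $ k \<noteq> 0"
proof -
  define Z where "Z = {i. rho $ i \<noteq> 0}"
  have cl: "l \<in> Z" if "a \<in> Z" "(a, l) \<in> E" for a l
  proof (rule closure_lemma[OF kpos, where Z=Z and v=rho])
    show "\<And>j. j \<in> Z \<Longrightarrow> (laplacian E kappa *v rho) $ j = 0"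
      using rho_ker by (simp add: matkernel_def)
  qed (use that in \<open>auto simp: Z_def\<close>)
  obtain a where a: "rho $ a \<noteq> 0" using rho_nz by (metis vec_eq_iff zero_index)
  then have aS: "a \<in> S" using rho_supp by blast
  have "(a, k) \<in> E\<^sup>*" using trm aS k unfolding is_terminal_scc_def is_scc_def by blast
  then have "k \<in> Z" by (intro closure_rtrancl[of Z E a k]) (use cl a in \<open>auto simp: Z_def\<close>)
  then show ?thesis by (simp add: Z_def)
qed

lemma kernel_on_S:
  fixes E :: "('m::finite \<times> 'm) set" and rho v :: "real^'m"
  assumes kpos: "\<And>i j. (i, j) \<in> E \<Longrightarrow> kappa i j > 0"
    and trm: "is_terminal_scc E S"
    and c1: "c1 \<in> S"
    and rho_ker: "rho \<in> matkernel (laplacian E kappa)"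
    and rho_c1: "rho $ c1 \<noteq> 0"
    and v: "v \<in> matkernel (laplacian E kappa)"
    and k: "k \<in> S"
  shows "v $ k = (v $ c1 / rho $ c1) * rho $ k"
proof (rule ccontr)
  assume ne: "v $ k \<noteq> (v $ c1 / rho $ c1) * rho $ k"
  define w where "w = v - (v $ c1 / rho $ c1) *\<^sub>R rho"
  have w: "w \<in> matkernel (laplacian E kappa)"
    using v rho_ker by (simp add: w_def matkernel_def matrix_vector_mult_diff_distrib
        matrix_vector_mult_scaleR)
  have wc1: "w $ c1 = 0" using rho_c1 by (simp add: w_def)
  define Z where "Z = {i. i \<in> S \<and> w $ i \<noteq> 0}"
  have tS: "\<And>a b. a \<in> S \<Longrightarrow> (a, b) \<in> E \<Longrightarrow> b \<in> S"
    using trm unfolding is_terminal_scc_def by blast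
  have cl: "l \<in> Z" if "a \<in> Z" "(a, l) \<in> E" for a l
  proof (rule closure_lemma[OF kpos, where Z=Z and v=w])
    show "\<And>j. j \<in> Z \<Longrightarrow> w $ j \<noteq> 0" by (simp add: Z_def)
    show "\<And>j. j \<in> Z \<Longrightarrow> (laplacian E kappa *v w) $ j = 0"
      using w by (simp add: matkernel_def)
    show "a' \<in> Z" if "j \<in> Z" "(a', j) \<in> E" "a' \<noteq> j" "w $ a' \<noteq> 0" for a' j
    proof (rule ccontr)
      assume "a' \<notin> Z"
      then have "a' \<notin> S" using that(4) by (simp add: Z_def)
      moreover have "(a', j) \<in> E\<^sup>*" using that(2) by blast
      ultimately have "w $ a' = 0"
        using transient_zero[OF kpos trm w] that(1) by (auto simp: Z_def)
      then show False using that(4) by simp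
    qed
  qed (use that in auto)
  have "k \<in> Z" using ne k by (auto simp: Z_def w_def field_simps)
  moreover have "(k, c1) \<in> E\<^sup>*" using trm k c1 unfolding is_terminal_scc_def is_scc_def by blast
  ultimately have "c1 \<in> Z" by (intro closure_rtrancl[of Z E k c1]) (use cl in auto)
  then show False using wc1 by (simp add: Z_def)
qed

lemma subspace_matkernel: "subspace (matkernel (A :: real^'a::finite^'b::finite))"
  unfolding matkernel_def
  by (rule linear_subspace_kernel) (rule matrix_vector_mul_linear)

lemma ker_sub: "matkernel (laplacian E kappa) \<subseteq> matkernel (Mmat C E kappa)"
  unfolding matkernel_def Mmat_def
  by (auto simp: matrix_vector_mul_assoc[symmetric])

lemma ker_eq:
  assumes "dynamic_deficiency C E kappa = 0"
  shows "matkernel (Mmat C E kappa) = matkernel (laplacian E kappa)"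
proof -
  have "dim (matkernel (Mmat C E kappa)) = dim (matkernel (laplacian E kappa))"
    using assms unfolding dynamic_deficiency_def by simp
  then show ?thesis
    using subspace_dim_equal[OF subspace_matkernel subspace_matkernel ker_sub[of E kappa C]]
    by (metis order_refl)
qed

lemma rowspan_orth:
  fixes A :: "real^'a::finite^'b::finite"
  assumes "a \<in> rowspan A" "v \<in> matkernel A"
  shows "a \<bullet> v = 0"
proof -
  show ?thesis
  proof (rule span_induct[where P="\<lambda>a. a \<bullet> v = 0", OF assms(1)[unfolded rowspan_def]])
    show "subspace {a. a \<bullet> v = 0}"
      by (auto simp: subspace_def inner_add_left)
    fix x assume "x \<in> rows A"
    then obtain i where "x = row i A" by (auto simp: rows_def)
    then have "x = A $ i" by (simp add: row_def vec_eq_iff)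
    then show "x \<bullet> v = 0"
      using assms(2) by (simp add: matkernel_def matrix_vector_mul_component[symmetric])
  qed
qed

lemma orth_rowspan:
  fixes A :: "real^'a::finite^'b::finite"
  assumes "\<And>v. v \<in> matkernel A \<Longrightarrow> a \<bullet> v = 0"
  shows "a \<in> rowspan A"
proof -
  obtain y z where y: "y \<in> span (rows A)" and z: "\<And>w. w \<in> span (rows A) \<Longrightarrow> orthogonal z w"
    and a: "a = y + z"
    using orthogonal_subspace_decomp_exists[of "rows A" a] by metis
  have "z \<in> matkernel A"
  proof -
    have "(A *v z) $ k = 0" for k
    proof -
      have "A $ k = row k A" by (simp add: row_def vec_eq_iff)
      then have "A $ k \<in> span (rows A)" by (auto simp: rows_def intro: span_base)
      then have "orthogonal z (A $ k)" by (rule z)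
      then show ?thesis by (simp add: matrix_vector_mul_component orthogonal_def inner_commute)
    qed
    then show ?thesis by (simp add: matkernel_def vec_eq_iff)
  qed
  then have "a \<bullet> z = 0" by (rule assms)
  moreover have "y \<bullet> z = 0" using z[OF y] by (simp add: orthogonal_def inner_commute)
  ultimately have "z \<bullet> z = 0" using a by (simp add: inner_add_left)
  then have "z = 0" by simp
  then show ?thesis using a y by (simp add: rowspan_def)
qed

lemma hv_comp: "haldane_vec rho c1 i $ j = (if j = i then 1 else 0) - (rho $ i / rho $ c1) * (if j = c1 then 1 else 0)"
  by (simp add: haldane_vec_def axis_def)

lemma hv_inner: "haldane_vec rho c1 i \<bullet> v = v $ i - (rho $ i / rho $ c1) * v $ c1"
  by (simp add: haldane_vec_def inner_diff_left inner_commute[of "axis _ _" v] inner_axis)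

theorem mainTheorem3:
  fixes C :: "'m::finite \<Rightarrow> 'n::finite \<Rightarrow> nat"
    and E :: "('m \<times> 'm) set"
    and kappa :: "'m \<Rightarrow> 'm \<Rightarrow> real"
    and S :: "'m set" and c1 :: 'm and rho :: "real^'m"
  assumes kappa_pos: "\<And>i j. (i, j) \<in> E \<Longrightarrow> kappa i j > 0"
    and deficiency0: "dynamic_deficiency C E kappa = 0"
    and terminal: "is_terminal_scc E S"
    and c1: "c1 \<in> S"
    and rho_ker: "rho \<in> matkernel (laplacian E kappa)"
    and rho_nz: "rho \<noteq> 0"
    and rho_supp: "\<And>j. j \<notin> S \<Longrightarrow> rho $ j = 0"
  shows "(\<forall>i\<in>S. rho $ i \<noteq> 0)
    \<and> (\<forall>x. (\<forall>s. 0 \<le> x $ s) \<longrightarrow> is_steady_state C E kappa x \<longrightarrow>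
          (\<forall>i\<in>S - {c1}. Psi C x $ i = (rho $ i / rho $ c1) * Psi C x $ c1))
    \<and> (\<forall>i\<in>S - {c1}. haldane_vec rho c1 i \<in> type1_invariants C E kappa S)
    \<and> inj_on (haldane_vec rho c1) (S - {c1})
    \<and> independent (haldane_vec rho c1 ` (S - {c1}))
    \<and> span (haldane_vec rho c1 ` (S - {c1})) = type1_invariants C E kappa S
    \<and> dim (type1_invariants C E kappa S) = card S - 1"
proof -
  note kpos = kappa_pos
  have rhoS: "\<forall>i\<in>S. rho $ i \<noteq> 0"
    using rho_nonzero[OF kpos terminal rho_ker rho_nz rho_supp] by blast
  then have rc1: "rho $ c1 \<noteq> 0" using c1 by blast
  have kerML: "matkernel (Mmat C E kappa) = matkernel (laplacian E kappa)"
    by (rule ker_eq[OF deficiency0])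
  have kerS: "v $ i = (v $ c1 / rho $ c1) * rho $ i"
    if "v \<in> matkernel (laplacian E kappa)" "i \<in> S" for v i
    by (rule kernel_on_S[OF kpos terminal c1 rho_ker rc1 that])
  let ?h = "haldane_vec rho c1"
  let ?T = "type1_invariants C E kappa S"
  have horth: "?h i \<bullet> v = 0" if "i \<in> S" "v \<in> matkernel (laplacian E kappa)" for i v
    using kerS[OF that(2) that(1)] rc1 by (simp add: hv_inner)
  have P2: "\<forall>x. (\<forall>s. 0 \<le> x $ s) \<longrightarrow> is_steady_state C E kappa x \<longrightarrow>
          (\<forall>i\<in>S - {c1}. Psi C x $ i = (rho $ i / rho $ c1) * Psi C x $ c1)"
  proof (intro allI impI ballI)
    fix x i assume "is_steady_state C E kappa x" "i \<in> S - {c1}"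
    then have "Psi C x \<in> matkernel (laplacian E kappa)"
      using kerML by (auto simp: is_steady_state_def matkernel_def)
    from kerS[OF this] \<open>i \<in> S - {c1}\<close> show "Psi C x $ i = (rho $ i / rho $ c1) * Psi C x $ c1"
      by simp
  qed
  have T_sub: "subspace ?T"
  proof -
    have "?T = {a. \<forall>j. j \<notin> S \<longrightarrow> a $ j = 0} \<inter> rowspan (Mmat C E kappa)"
      by (auto simp: type1_invariants_def)
    moreover have "subspace {a::real^'m. \<forall>j. j \<notin> S \<longrightarrow> a $ j = 0}"
      by (auto simp: subspace_def)
    moreover have "subspace (rowspan (Mmat C E kappa))"
      by (simp add: rowspan_def subspace_span)
    ultimately show ?thesis by (simp add: subspace_inter)
  qed
  have P3: "\<forall>i\<in>S - {c1}. ?h i \<in> ?T"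
  proof
    fix i assume i: "i \<in> S - {c1}"
    show "?h i \<in> ?T" unfolding type1_invariants_def
    proof (intro CollectI conjI allI impI)
      fix j assume "j \<notin> S" then show "?h i $ j = 0" using i c1 by (auto simp: hv_comp)
    next
      show "?h i \<in> rowspan (Mmat C E kappa)"
        by (rule orth_rowspan) (use horth i kerML in auto)
    qed
  qed
  have hcomp: "?h i $ j = (if j = i then 1 else 0)" if "j \<noteq> c1" for i j
    using that by (simp add: hv_comp)
  have P4: "inj_on ?h (S - {c1})"
  proof
    fix i j assume "i \<in> S - {c1}" "j \<in> S - {c1}" "?h i = ?h j"
    then have "?h i $ i = ?h j $ i" by simp
    then show "i = j" using \<open>i \<in> S - {c1}\<close> hcomp by (auto split: if_splits)
  qed
  have sumcomp: "(\<Sum>i\<in>S - {c1}. u i *\<^sub>R ?h i) $ j = u j" if "j \<in> S - {c1}" for u j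
  proof -
    have "(\<Sum>i\<in>S - {c1}. u i *\<^sub>R ?h i) $ j = (\<Sum>i\<in>S - {c1}. u i * (if j = i then 1 else 0))"
      using that by (simp add: sum_component hcomp)
    also have "\<dots> = (\<Sum>i\<in>S - {c1}. if j = i then u j else 0)"
      by (rule sum.cong) auto
    also have "\<dots> = u j" using that by (simp add: sum.delta)
    finally show ?thesis .
  qed
  have P5: "independent (?h ` (S - {c1}))"
  proof -
    have fin: "finite (?h ` (S - {c1}))" by simp
    show ?thesis
    proof
      assume "dependent (?h ` (S - {c1}))"
      then obtain u where u: "\<exists>w\<in>?h ` (S - {c1}). u w \<noteq> 0"
        and s0: "(\<Sum>w\<in>?h ` (S - {c1}). u w *\<^sub>R w) = 0"
        using dependent_finite[OF fin] by blast
      from u obtain j where j: "j \<in> S - {c1}" "u (?h j) \<noteq> 0" by blast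
      have "(\<Sum>i\<in>S - {c1}. u (?h i) *\<^sub>R ?h i) = 0"
        using s0 by (simp add: sum.reindex[OF P4])
      then have "(\<Sum>i\<in>S - {c1}. u (?h i) *\<^sub>R ?h i) $ j = 0" by simp
      then show False using sumcomp[OF j(1), of "\<lambda>i. u (?h i)"] j(2) by simp
    qed
  qed
  have P6: "span (?h ` (S - {c1})) = ?T"
  proof
    show "span (?h ` (S - {c1})) \<subseteq> ?T"
      using P3 T_sub by (intro span_minimal) auto
  next
    show "?T \<subseteq> span (?h ` (S - {c1}))"
    proof
      fix a assume a: "a \<in> ?T"
      define s where "s = (\<Sum>i\<in>S - {c1}. a $ i *\<^sub>R ?h i)"
      have s_span: "s \<in> span (?h ` (S - {c1}))"
        unfolding s_def by (intro span_sum span_mul span_base) auto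
      have s_T: "s \<in> ?T" using s_span P3 T_sub span_minimal[of "?h ` (S - {c1})" ?T] by auto
      define b where "b = a - s"
      have bT: "b \<in> ?T" unfolding b_def using a s_T T_sub by (simp add: subspace_diff)
      have bj: "b $ j = 0" if "j \<noteq> c1" for j
      proof (cases "j \<in> S")
        case True
        then show ?thesis using that sumcomp[of j "\<lambda>i. a $ i"] by (simp add: b_def s_def)
      next
        case False
        have "s $ j = 0" using s_T False by (simp add: type1_invariants_def)
        moreover have "a $ j = 0" using a False by (simp add: type1_invariants_def)
        ultimately show ?thesis by (simp add: b_def)
      qed
      have "b \<bullet> rho = 0"
        using bT rho_ker kerML rowspan_orth[of b "Mmat C E kappa" rho]
        by (simp add: type1_invariants_def)
      moreover have "b \<bullet> rho = b $ c1 * rho $ c1"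
      proof -
        have "b \<bullet> rho = (\<Sum>j\<in>UNIV. b $ j * rho $ j)" by (simp add: inner_vec_def)
        also have "\<dots> = (\<Sum>j\<in>UNIV. if j = c1 then b $ c1 * rho $ c1 else 0)"
          by (rule sum.cong) (auto simp: bj)
        finally show ?thesis by simp
      qed
      ultimately have "b $ c1 = 0" using rc1 by simp
      then have "b = 0" using bj by (metis vec_eq_iff zero_index)
      then show "a \<in> span (?h ` (S - {c1}))" using s_span by (simp add: b_def)
    qed
  qed
  have P7: "dim ?T = card S - 1"
  proof -
    have "dim ?T = dim (?h ` (S - {c1}))" using P6[symmetric] by simp
    also have "\<dots> = card (?h ` (S - {c1}))" by (rule dim_eq_card_independent[OF P5])
    also have "\<dots> = card (S - {c1})" by (rule card_image[OF P4])
    also have "\<dots> = card S - 1" using c1 by simp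
    finally show ?thesis .
  qed
  show ?thesis using rhoS P2 P3 P4 P5 P6 P7 by blast
qed

end
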